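(* Let $G$ be a Polish group. Every openly Haar null subset $A\subseteq G$ is contained in a $G_\delta$ set that is Haar null.
   Context: A Polish group is a topological group whose topology is separable and completely metrizable. A set $A\subseteq G$ is Haar null if there are a Borel set $B\supseteq A$ and a Borel probability measure $\mu$ on $G$ with $\mu(gBh)=0$ for all $g,h\in G$. A set $A\subseteq G$ is openly Haar null if there is a Borel probability measure $\mu$ on $G$ such that for every $\varepsilon>0$ there is an open set $U\supseteq A$ with $\mu(gUh)<\varepsilon$ for all $g,h\in G$. *)

theory Defs
  imports "HOL-Probability.Probability"
begin

text \<open>A Polish group is modelled as a type of class
  polish_space (separable complete metric space) together with
  topological_group_add (a possibly non-commutative group, written additively,
  with continuous group operations w.r.t. the same topology).\<close>

definition haar_null :: "'a::{polish_space, topological_group_add} set \<Rightarrow> bool" where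
  "haar_null A \<longleftrightarrow>
     (\<exists>B \<in> sets borel. A \<subseteq> B \<and>
       (\<exists>\<mu>::'a measure. prob_space \<mu> \<and> sets \<mu> = sets borel \<and>
          (\<forall>g h. emeasure \<mu> ((\<lambda>x. g + x + h) ` B) = 0)))"

definition openly_haar_null :: "'a::{polish_space, topological_group_add} set \<Rightarrow> bool" where
  "openly_haar_null A \<longleftrightarrow>
     (\<exists>\<mu>::'a measure. prob_space \<mu> \<and> sets \<mu> = sets borel \<and>
        (\<forall>\<epsilon>::real. \<epsilon> > 0 \<longrightarrow>
           (\<exists>U. open U \<and> A \<subseteq> U \<and>
              (\<forall>g h. emeasure \<mu> ((\<lambda>x. g + x + h) ` U) < ennreal \<epsilon>))))"

end

theory Submission
  imports Defs
begin

lemma open_translate: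
  fixes U :: "'a::topological_group_add set"
  assumes "open U"
  shows "open ((\<lambda>x. g + x + h) ` U)"
proof -
  have eq: "(\<lambda>x. g + x + h) ` U = (\<lambda>y. - g + y + - h) -` U"
  proof (intro set_eqI iffI)
    fix y assume "y \<in> (\<lambda>x. g + x + h) ` U"
    then obtain x where "x \<in> U" "y = g + x + h" by blast
    then show "y \<in> (\<lambda>y. - g + y + - h) -` U" by (simp add: add.assoc)
  next
    fix y assume "y \<in> (\<lambda>y. - g + y + - h) -` U"
    then have "- g + y + - h \<in> U" by simp
    moreover have "y = g + (- g + y + - h) + h" by (simp add: add.assoc)
    ultimately show "y \<in> (\<lambda>x. g + x + h) ` U" by blast
  qed
  have "continuous_on UNIV (\<lambda>y::'a. - g + y + - h)"
    by (intro continuous_intros)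
  then show ?thesis unfolding eq using assms
    by (simp add: continuous_on_open_vimage)
qed

theorem proposition4p33:
  fixes A :: "'a::{polish_space, topological_group_add} set"
  assumes "openly_haar_null A"
  shows "\<exists>B. gdelta_in euclidean B \<and> A \<subseteq> B \<and> haar_null B"
proof -
  obtain \<mu> :: "'a measure" where P: "prob_space \<mu>" and S: "sets \<mu> = sets borel"
    and H: "\<And>\<epsilon>::real. \<epsilon> > 0 \<Longrightarrow> \<exists>U. open U \<and> A \<subseteq> U \<and>
              (\<forall>g h. emeasure \<mu> ((\<lambda>x. g + x + h) ` U) < ennreal \<epsilon>)"
    using assms unfolding openly_haar_null_def by blast
  have "\<forall>n::nat. \<exists>U. open U \<and> A \<subseteq> U \<and>
              (\<forall>g h. emeasure \<mu> ((\<lambda>x. g + x + h) ` U) < ennreal (inverse (real (Suc n))))"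
    using H by simp
  then obtain U where U: "\<And>n. open (U n)" "\<And>n. A \<subseteq> U n"
    "\<And>n g h. emeasure \<mu> ((\<lambda>x. g + x + h) ` U n) < ennreal (inverse (real (Suc n)))"
    by metis
  define B where "B = \<Inter>(range U)"
  have gd: "gdelta_in euclidean B"
    unfolding B_def
    by (intro gdelta_in_Inter open_imp_gdelta_in) (auto simp: U(1))
  have AB: "A \<subseteq> B" using U(2) unfolding B_def by blast
  have Bb: "B \<in> sets borel" unfolding B_def
    using U(1) by (intro sets.countable_INT) auto
  have "emeasure \<mu> ((\<lambda>x. g + x + h) ` B) = 0" for g h
  proof -
    have le: "emeasure \<mu> ((\<lambda>x. g + x + h) ` B) \<le> ennreal (inverse (real (Suc n)))" for n
    proof -
      have "(\<lambda>x. g + x + h) ` U n \<in> sets \<mu>"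
        using open_translate[OF U(1)] S by simp
      then have "emeasure \<mu> ((\<lambda>x. g + x + h) ` B) \<le> emeasure \<mu> ((\<lambda>x. g + x + h) ` U n)"
        by (rule emeasure_mono[rotated]) (auto simp: B_def)
      also have "\<dots> \<le> ennreal (inverse (real (Suc n)))" using U(3) less_imp_le by blast
      finally show ?thesis .
    qed
    have "(\<lambda>n. ennreal (inverse (real (Suc n)))) \<longlonglongrightarrow> ennreal 0"
      by (intro tendsto_ennrealI LIMSEQ_inverse_real_of_nat)
    then have "emeasure \<mu> ((\<lambda>x. g + x + h) ` B) \<le> ennreal 0"
      by (rule LIMSEQ_le_const) (use le in auto)
    then show ?thesis by simp
  qed
  then have "haar_null B" unfolding haar_null_def using Bb P S by blast
  then show ?thesis using gd AB by blast
qed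

end
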